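(* Let $T$ be a tree and let $v\in V(T)$. Then there exists a constant $C=C(T)$ with the following property. Let $H$ be a bipartite graph with parts $X$ and $Y$ such that $d(y)\ge C|X|^{1/2}$ for every $y\in Y$, and such that the number of triples $(y,x_1,x_2)\in Y\times X\times X$ of distinct vertices with $yx_1,yx_2\in E(H)$ is more than $C|X|^2$. Then $H$ contains a copy of $T[2]$ in which the two vertices corresponding to $v$ are embedded in $X$.
   Context: For a graph $F$, the $2$-blowup $F[2]$ is obtained by replacing each vertex $u$ of $F$ by an independent set of two vertices (the two images of $u$) and each edge by a copy of $K_{2,2}$ between the corresponding sets. $d(y)$ denotes the degree of $y$ in $H$. *)

theory Defs
  imports Complex_Main
begin

definition simple_graph :: "'a set \<Rightarrow> 'a set set \<Rightarrow> bool" where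
  "simple_graph V E \<longleftrightarrow> finite V \<and>
     (\<forall>e\<in>E. \<exists>u w. u \<noteq> w \<and> u \<in> V \<and> w \<in> V \<and> e = {u, w})"

definition adj :: "'a set set \<Rightarrow> 'a \<Rightarrow> 'a \<Rightarrow> bool" where
  "adj E u w \<longleftrightarrow> {u, w} \<in> E"

definition connected_graph :: "'a set \<Rightarrow> 'a set set \<Rightarrow> bool" where
  "connected_graph V E \<longleftrightarrow>
     (\<forall>u\<in>V. \<forall>w\<in>V. (u, w) \<in> {(a, b). adj E a b}\<^sup>*)"

definition is_cycle :: "'a set \<Rightarrow> 'a set set \<Rightarrow> 'a list \<Rightarrow> bool" where
  "is_cycle V E cs \<longleftrightarrow> length cs \<ge> 3 \<and> distinct cs \<and> set cs \<subseteq> V \<and>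
     (\<forall>i. Suc i < length cs \<longrightarrow> adj E (cs ! i) (cs ! Suc i)) \<and>
     adj E (last cs) (hd cs)"

definition acyclic_graph :: "'a set \<Rightarrow> 'a set set \<Rightarrow> bool" where
  "acyclic_graph V E \<longleftrightarrow> \<not> (\<exists>cs. is_cycle V E cs)"

definition is_tree :: "'a set \<Rightarrow> 'a set set \<Rightarrow> bool" where
  "is_tree V E \<longleftrightarrow> simple_graph V E \<and> V \<noteq> {} \<and> connected_graph V E \<and> acyclic_graph V E"

text \<open>The 2-blowup F[2]: vertex u is replaced by (u,False),(u,True).\<close>
definition blowup2_V :: "'a set \<Rightarrow> ('a \<times> bool) set" where
  "blowup2_V V = V \<times> UNIV"

definition blowup2_E :: "'a set set \<Rightarrow> ('a \<times> bool) set set" where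
  "blowup2_E E = {{(u, i), (w, j)} | u w i j. {u, w} \<in> E}"

definition subgraph_copy ::
  "'a set \<Rightarrow> 'a set set \<Rightarrow> 'b set \<Rightarrow> 'b set set \<Rightarrow> ('a \<Rightarrow> 'b) \<Rightarrow> bool" where
  "subgraph_copy VF EF VH EH f \<longleftrightarrow> inj_on f VF \<and> f ` VF \<subseteq> VH \<and>
     (\<forall>u\<in>VF. \<forall>w\<in>VF. {u, w} \<in> EF \<longrightarrow> {f u, f w} \<in> EH)"

definition bipartite_graph :: "'b set \<Rightarrow> 'b set \<Rightarrow> 'b set set \<Rightarrow> bool" where
  "bipartite_graph X Y E \<longleftrightarrow> finite X \<and> finite Y \<and> X \<inter> Y = {} \<and>
     E \<subseteq> {{x, y} | x y. x \<in> X \<and> y \<in> Y}"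

definition degree :: "'b set set \<Rightarrow> 'b \<Rightarrow> nat" where
  "degree E y = card {x. {x, y} \<in> E}"

definition cherries :: "'b set \<Rightarrow> 'b set \<Rightarrow> 'b set set \<Rightarrow> ('b \<times> 'b \<times> 'b) set" where
  "cherries X Y E = {(y, x1, x2). y \<in> Y \<and> x1 \<in> X \<and> x2 \<in> X \<and>
       y \<noteq> x1 \<and> y \<noteq> x2 \<and> x1 \<noteq> x2 \<and> {y, x1} \<in> E \<and> {y, x2} \<in> E}"

end

theory Submission
  imports Defs "HOL-Analysis.Convex"
begin


lemma adj_sym: "adj E u w = adj E w u"
  by (simp add: adj_def insert_commute)

definition is_path :: "'a set \<Rightarrow> 'a set set \<Rightarrow> 'a list \<Rightarrow> bool" where
  "is_path V E ps \<longleftrightarrow> ps \<noteq> [] \<and> distinct ps \<and> set ps \<subseteq> V \<and>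
     (\<forall>i. Suc i < length ps \<longrightarrow> adj E (ps ! i) (ps ! Suc i))"

lemma simple_no_loop: "simple_graph V E \<Longrightarrow> \<not> adj E u u"
  unfolding simple_graph_def adj_def by (metis doubleton_eq_iff insert_absorb2)

lemma simple_adj_in: "simple_graph V E \<Longrightarrow> adj E u w \<Longrightarrow> u \<in> V \<and> w \<in> V"
  unfolding simple_graph_def adj_def by (metis doubleton_eq_iff)

lemma is_path_rev: "is_path V E ps \<Longrightarrow> is_path V E (rev ps)"
  unfolding is_path_def
proof (intro conjI allI impI; (elim conjE)?)
  fix i assume a: "ps \<noteq> []" "distinct ps" "set ps \<subseteq> V"
    "\<forall>i. Suc i < length ps \<longrightarrow> adj E (ps ! i) (ps ! Suc i)" and i: "Suc i < length (rev ps)"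
  have "adj E (ps ! (length ps - Suc (Suc i))) (ps ! Suc (length ps - Suc (Suc i)))"
    using a(4) i by auto
  moreover have "Suc (length ps - Suc (Suc i)) = length ps - Suc i" using i by auto
  ultimately show "adj E (rev ps ! i) (rev ps ! Suc i)"
    using i by (simp add: rev_nth adj_sym)
qed auto

lemma path_end_leaf:
  assumes sg: "simple_graph V E" and ac: "acyclic_graph V E"
    and p: "is_path V E ps" and len: "length ps \<ge> 2"
    and maxp: "\<And>qs. is_path V E qs \<Longrightarrow> length qs \<le> length ps"
    and w: "adj E (last ps) w"
  shows "w = ps ! (length ps - 2)"
proof -
  define k where "k = length ps - 1"
  have lastk: "last ps = ps ! k" using p len unfolding k_def is_path_def by (simp add: last_conv_nth)
  have wV: "w \<in> V" using simple_adj_in[OF sg w] by auto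
  have "w \<in> set ps"
  proof (rule ccontr)
    assume nw: "w \<notin> set ps"
    have "is_path V E (ps @ [w])"
      unfolding is_path_def
    proof (intro conjI allI impI)
      fix i assume i: "Suc i < length (ps @ [w])"
      show "adj E ((ps @ [w]) ! i) ((ps @ [w]) ! Suc i)"
      proof (cases "Suc i < length ps")
        case True then show ?thesis using p unfolding is_path_def by (simp add: nth_append)
      next
        case False
        then have "i = k" using i unfolding k_def by auto
        then have "Suc i = length ps" "i < length ps" using len unfolding k_def by auto
        then show ?thesis using w lastk \<open>i = k\<close> by (simp add: nth_append)
      qed
    qed (use p nw wV in \<open>auto simp: is_path_def\<close>)
    then show False using maxp[of "ps @ [w]"] by simp
  qed
  then obtain i where i: "i < length ps" "ps ! i = w" by (metis in_set_conv_nth)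
  have "i \<noteq> k" using simple_no_loop[OF sg] w lastk i by auto
  then have ik: "i < k" using i unfolding k_def by auto
  show ?thesis
  proof (rule ccontr)
    assume "w \<noteq> ps ! (length ps - 2)"
    moreover have "length ps - 2 = k - 1" unfolding k_def by simp
    ultimately have "i \<noteq> k - 1" using i by auto
    then have ik2: "i + 1 < k" using ik by simp
    define cs where "cs = drop i ps"
    have "is_cycle V E cs"
      unfolding is_cycle_def
    proof (intro conjI allI impI)
      show "3 \<le> length cs" using ik2 unfolding cs_def k_def by auto
      show "distinct cs" using p unfolding cs_def is_path_def by auto
      show "set cs \<subseteq> V" using p unfolding cs_def is_path_def by (meson order.trans set_drop_subset)
      fix j assume "Suc j < length cs"
      then show "adj E (cs ! j) (cs ! Suc j)" using p unfolding cs_def is_path_def by auto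
    next
      have "last cs = last ps" using ik unfolding cs_def k_def by (simp add: last_drop)
      moreover have "hd cs = w" using i unfolding cs_def by (simp add: hd_drop_conv_nth)
      ultimately show "adj E (last cs) (hd cs)" using w by simp
    qed
    then show False using ac unfolding acyclic_graph_def by blast
  qed
qed

lemma path_len_le: "finite V \<Longrightarrow> is_path V E ps \<Longrightarrow> length ps \<le> card V"
proof -
  assume f: "finite V" and p: "is_path V E ps"
  then have "length ps = card (set ps)" by (simp add: is_path_def distinct_card)
  also have "\<dots> \<le> card V" using p f by (intro card_mono) (auto simp: is_path_def)
  finally show ?thesis .
qed

lemma exists_leaf:
  assumes sg: "simple_graph V E" and ac: "acyclic_graph V E" and v: "v \<in> V"
    and c2: "card V \<ge> 2"
  shows "\<exists>u\<in>V. u \<noteq> v \<and> (\<forall>w w'. adj E u w \<longrightarrow> adj E u w' \<longrightarrow> w = w')"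
proof -
  have fin: "finite V" using sg unfolding simple_graph_def by auto
  have "is_path V E [v]" using v by (simp add: is_path_def)
  obtain ps where p: "is_path V E ps" and maxp: "\<And>qs. is_path V E qs \<Longrightarrow> length qs \<le> length ps"
  proof -
    have h1: "\<exists>ps. is_path V E ps \<and> length ps = 1" using \<open>is_path V E [v]\<close> by force
    have h2: "\<forall>y. (\<exists>ps. is_path V E ps \<and> length ps = y) \<longrightarrow> y < Suc (card V)"
        using fin path_len_le[of V E] by (auto simp: less_Suc_eq_le)
    have "\<exists>x. (\<exists>ps. is_path V E ps \<and> length ps = x) \<and> (\<forall>y. (\<exists>ps. is_path V E ps \<and> length ps = y) \<longrightarrow> y \<le> x)"
      using ex_has_greatest_nat[where P="\<lambda>k. \<exists>ps. is_path V E ps \<and> length ps = k" and f="\<lambda>x. x", OF h1 h2] by simp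
    then show ?thesis using that by blast
  qed
  show ?thesis
  proof (cases "length ps \<ge> 2")
    case False
    then have "length ps = 1" using p unfolding is_path_def by (cases ps) (auto simp: Suc_le_eq)
    have noedge: "\<not> adj E a b" for a b
    proof
      assume ab: "adj E a b"
      then have "a \<noteq> b" using simple_no_loop[OF sg] by auto
      then have "is_path V E [a, b]" using ab simple_adj_in[OF sg ab] by (auto simp: is_path_def nth_Cons split: nat.splits)
      then show False using maxp[of "[a,b]"] \<open>length ps = 1\<close> by simp
    qed
    obtain u where "u \<in> V" "u \<noteq> v"
    proof -
      have "V \<noteq> {v}" using c2 by auto
      then show ?thesis using that v by blast
    qed
    then show ?thesis using noedge by blast
  next
    case True
    have pr: "is_path V E (rev ps)" by (rule is_path_rev[OF p])
    have leaf1: "\<forall>w w'. adj E (last ps) w \<longrightarrow> adj E (last ps) w' \<longrightarrow> w = w'"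
      using path_end_leaf[OF sg ac p True maxp] by metis
    have leaf2: "\<forall>w w'. adj E (last (rev ps)) w \<longrightarrow> adj E (last (rev ps)) w' \<longrightarrow> w = w'"
      using path_end_leaf[OF sg ac pr _ ] True maxp by (metis length_rev)
    have "last ps \<noteq> hd ps"
    proof -
      have "distinct ps" using p by (simp add: is_path_def)
      then show ?thesis using True
        by (cases ps) (auto simp: last_conv_nth)
    qed
    moreover have "last ps \<in> V" "hd ps \<in> V"
    proof -
      have "set ps \<subseteq> V" "ps \<noteq> []" using p unfolding is_path_def by auto
      then show "last ps \<in> V" "hd ps \<in> V" by auto
    qed
    ultimately show ?thesis using leaf1 leaf2 by (metis last_rev)
  qed
qed



definition pairs :: "'b set \<Rightarrow> ('b \<times> 'b) set" where
  "pairs W = {(a, b). a \<in> W \<and> b \<in> W \<and> a \<noteq> b}"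

definition compE :: "'b set set \<Rightarrow> 'b \<times> 'b \<Rightarrow> 'b \<times> 'b \<Rightarrow> bool" where
  "compE H P Q \<longleftrightarrow> adj H (fst P) (fst Q) \<and> adj H (fst P) (snd Q) \<and>
      adj H (snd P) (fst Q) \<and> adj H (snd P) (snd Q)"

definition pairof :: "('a \<times> bool \<Rightarrow> 'b) \<Rightarrow> 'a \<Rightarrow> 'b \<times> 'b" where
  "pairof f u = (f (u, False), f (u, True))"

definition emb_ok where
  "emb_ok V E H A B v f \<longleftrightarrow> inj_on f (V \<times> UNIV) \<and> (\<forall>u\<in>V. pairof f u \<in> A \<union> B) \<and>
     pairof f v \<in> A \<and> (\<forall>u\<in>V. \<forall>w\<in>V. adj E u w \<longrightarrow> compE H (pairof f u) (pairof f w) \<or> compE H (pairof f w) (pairof f u))"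

lemma card_img_le: "finite V \<Longrightarrow> card (f ` (V \<times> (UNIV::bool set))) \<le> 2 * card V"
proof -
  assume "finite V"
  then have "card (f ` (V \<times> (UNIV::bool set))) \<le> card (V \<times> (UNIV::bool set))"
    by (intro card_image_le) auto
  also have "\<dots> = 2 * card V" by (simp add: card_cartesian_product mult.commute)
  finally show ?thesis .
qed

lemma embed:
  assumes sg: "simple_graph V E" and ac: "acyclic_graph V E" and v: "v \<in> V"
    and s: "2 * card V \<le> s" and Ane: "A \<noteq> {}"
    and Ad: "\<forall>P\<in>A. fst P \<noteq> snd P" and Bd: "\<forall>Q\<in>B. fst Q \<noteq> snd Q"
    and hA: "\<forall>P\<in>A. \<forall>S. finite S \<longrightarrow> card S \<le> s \<longrightarrow> (\<exists>Q\<in>B. compE H P Q \<and> fst Q \<notin> S \<and> snd Q \<notin> S)"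
    and hB: "\<forall>Q\<in>B. \<forall>S. finite S \<longrightarrow> card S \<le> s \<longrightarrow> (\<exists>P\<in>A. compE H P Q \<and> fst P \<notin> S \<and> snd P \<notin> S)"
  shows "\<exists>f. emb_ok V E H A B v f"
  using sg ac v s
proof (induction "card V" arbitrary: V E rule: less_induct)
  case less
  have fin: "finite V" using less.prems(1) unfolding simple_graph_def by auto
  show ?case
  proof (cases "card V \<ge> 2")
    case False
    then have "card V = 1" using less.prems(3) fin by (metis One_nat_def Suc_1 card_0_eq empty_iff less_2_cases not_le_imp_less)
    then have V1: "V = {v}" using less.prems(3) by (metis card_1_singletonE singletonD)
    obtain P0 where P0: "P0 \<in> A" using Ane by blast
    define f where "f = (\<lambda>(x::'a, i::bool). if i then snd P0 else fst P0)"
    have "pairof f v = P0" unfolding f_def pairof_def by simp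
    moreover have "inj_on f (V \<times> UNIV)" unfolding V1 inj_on_def f_def using Ad P0 by auto
    moreover have "\<not> adj E v v" using simple_no_loop[OF less.prems(1)] .
    ultimately have "emb_ok V E H A B v f" unfolding emb_ok_def V1 using P0 by auto
    then show ?thesis by blast
  next
    case True
    obtain u where uV: "u \<in> V" and uv: "u \<noteq> v" and leaf: "\<forall>w w'. adj E u w \<longrightarrow> adj E u w' \<longrightarrow> w = w'"
      using exists_leaf[OF less.prems(1,2,3) True] by blast
    define V' where "V' = V - {u}"
    define E' where "E' = {e\<in>E. u \<notin> e}"
    have adjE': "adj E' a b \<longleftrightarrow> adj E a b \<and> a \<noteq> u \<and> b \<noteq> u" for a b
      unfolding adj_def E'_def by auto
    have sg': "simple_graph V' E'"
      using less.prems(1) unfolding simple_graph_def V'_def E'_def by fastforce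
    have ac': "acyclic_graph V' E'"
      using less.prems(2) unfolding acyclic_graph_def is_cycle_def V'_def adjE' by blast
    have cV': "card V' < card V" unfolding V'_def using fin uV by (metis card_Diff1_less)
    have v': "v \<in> V'" using less.prems(3) uv unfolding V'_def by auto
    have s': "2 * card V' \<le> s" using cV' less.prems(4) by linarith
    obtain f' where f': "emb_ok V' E' H A B v f'" using less.hyps[OF cV' sg' ac' v' s'] by blast
    define S where "S = f' ` (V' \<times> UNIV)"
    have finS: "finite S" unfolding S_def V'_def using fin by auto
    have cS: "card S \<le> s"
    proof -
      have "card S \<le> 2 * card V'" unfolding S_def by (rule card_img_le) (use fin in \<open>simp add: V'_def\<close>)
      also have "\<dots> \<le> s" using cV' less.prems(4) by linarith
      finally show ?thesis .
    qed
    obtain p where pAB: "p \<in> A \<union> B" and pd: "fst p \<noteq> snd p" and pS: "fst p \<notin> S" "snd p \<notin> S"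
      and pc: "\<forall>w\<in>V'. adj E u w \<longrightarrow> compE H p (pairof f' w) \<or> compE H (pairof f' w) p"
    proof (cases "\<exists>w. adj E u w")
      case True
      then obtain w where w: "adj E u w" by blast
      have wV': "w \<in> V'" using simple_adj_in[OF less.prems(1) w] simple_no_loop[OF less.prems(1)] w
        unfolding V'_def by auto
      have only: "\<forall>w'\<in>V'. adj E u w' \<longrightarrow> w' = w" using leaf w by blast
      have "pairof f' w \<in> A \<union> B" using f' wV' unfolding emb_ok_def by auto
      then show ?thesis
      proof
        assume "pairof f' w \<in> A"
        then obtain Q where "Q \<in> B" "compE H (pairof f' w) Q" "fst Q \<notin> S" "snd Q \<notin> S"
          using hA finS cS by blast
        then show ?thesis using that[of Q] only Bd by blast
      next
        assume "pairof f' w \<in> B"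
        then obtain P where "P \<in> A" "compE H P (pairof f' w)" "fst P \<notin> S" "snd P \<notin> S"
          using hB finS cS by blast
        then show ?thesis using that[of P] only Ad by blast
      qed
    next
      case False
      obtain P0 where P0: "P0 \<in> A" using Ane by blast
      obtain Q0 where Q0: "Q0 \<in> B" using hA P0 by (metis card.empty finite.emptyI le0)
      obtain P where "P \<in> A" "fst P \<notin> S" "snd P \<notin> S"
        using hB Q0 finS cS by blast
      then show ?thesis using that[of P] False Ad by blast
    qed
    define f where "f = f'((u, False) := fst p, (u, True) := snd p)"
    have uV': "u \<notin> V'" unfolding V'_def by auto
    have prw: "w \<in> V' \<Longrightarrow> pairof f w = pairof f' w" for w using uV' unfolding pairof_def f_def by auto
    have pru: "pairof f u = p" unfolding pairof_def f_def by simp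
    have Vsplit: "V = insert u V'" unfolding V'_def using uV by auto
    have inj': "inj_on f' (V' \<times> UNIV)" using f' unfolding emb_ok_def by auto
    have fe: "x \<in> V' \<times> UNIV \<Longrightarrow> f x = f' x" for x using uV' unfolding f_def by auto
    have fu: "f (u, i) = (if i then snd p else fst p)" for i unfolding f_def by auto
    have "inj_on f (V \<times> UNIV)"
    proof (rule inj_onI)
      fix a b assume a: "a \<in> V \<times> UNIV" and b: "b \<in> V \<times> UNIV" and fab: "f a = f b"
      obtain a1 a2 b1 b2 where ab: "a = (a1, a2)" "b = (b1, b2)" by fastforce
      show "a = b"
      proof (cases "a1 = u"; cases "b1 = u")
        assume "a1 = u" "b1 = u" then show ?thesis using fab ab fu pd by (cases a2; cases b2) auto
      next
        assume "a1 = u" "b1 \<noteq> u"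
        then have "b \<in> V' \<times> UNIV" using b ab Vsplit by auto
        then have "f b \<in> S" unfolding S_def using fe by auto
        then show ?thesis using fab ab fu pS \<open>a1 = u\<close> by (cases a2) auto
      next
        assume "a1 \<noteq> u" "b1 = u"
        then have "a \<in> V' \<times> UNIV" using a ab Vsplit by auto
        then have "f a \<in> S" unfolding S_def using fe by auto
        then show ?thesis using fab ab fu pS \<open>b1 = u\<close> by (cases b2) auto
      next
        assume "a1 \<noteq> u" "b1 \<noteq> u"
        then have "a \<in> V' \<times> UNIV" "b \<in> V' \<times> UNIV" using a b ab Vsplit by auto
        then show ?thesis using inj' fab fe by (metis inj_onD)
      qed
    qed
    moreover have "\<forall>x\<in>V. pairof f x \<in> A \<union> B" using f' pAB prw pru Vsplit unfolding emb_ok_def by auto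
    moreover have "pairof f v \<in> A" using f' prw v' unfolding emb_ok_def by auto
    moreover have "\<forall>x\<in>V. \<forall>y\<in>V. adj E x y \<longrightarrow> compE H (pairof f x) (pairof f y) \<or> compE H (pairof f y) (pairof f x)"
    proof (intro ballI impI)
      fix x y assume x: "x \<in> V" and y: "y \<in> V" and xy: "adj E x y"
      have nl: "x \<noteq> y" using simple_no_loop[OF less.prems(1)] xy by auto
      consider "x = u" | "y = u" | "x \<noteq> u" "y \<noteq> u" by blast
      then show "compE H (pairof f x) (pairof f y) \<or> compE H (pairof f y) (pairof f x)"
      proof cases
        case 1
        then have "y \<in> V'" using y nl Vsplit by auto
        then show ?thesis using pc 1 xy pru prw by auto
      next
        case 2
        then have "x \<in> V'" using x nl Vsplit by auto
        then show ?thesis using pc 2 xy pru prw adj_sym by metis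
      next
        case 3
        then have "x \<in> V'" "y \<in> V'" "adj E' x y" using x y xy Vsplit adjE' by auto
        then show ?thesis using f' prw unfolding emb_ok_def by metis
      qed
    qed
    ultimately have "emb_ok V E H A B v f" unfolding emb_ok_def by blast
    then show ?thesis by blast
  qed
qed



lemma card_filter_sum: "finite B \<Longrightarrow> card {b\<in>B. P b} = (\<Sum>b\<in>B. if P b then 1 else 0)"
  by (simp add: sum.inter_filter[symmetric])

lemma dcount: "finite A \<Longrightarrow> finite B \<Longrightarrow>
  (\<Sum>a\<in>A. card {b\<in>B. r a b}) = (\<Sum>b\<in>B. card {a\<in>A. r a b})"
  by (simp add: card_filter_sum sum.swap[of _ A B])

lemma core:
  fixes A :: "'p set" and B :: "'q set" and wa :: "'p \<Rightarrow> nat" and wb :: "'q \<Rightarrow> nat"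
  assumes fA: "finite A" and fB: "finite B"
    and big: "(\<Sum>a\<in>A. card {b\<in>B. r a b}) > (\<Sum>a\<in>A. wa a) + (\<Sum>b\<in>B. wb b)"
  shows "\<exists>A'\<subseteq>A. \<exists>B'\<subseteq>B. A' \<noteq> {} \<and> (\<forall>a\<in>A'. wa a \<le> card {b\<in>B'. r a b})
           \<and> (\<forall>b\<in>B'. wb b \<le> card {a\<in>A'. r a b})"
proof -
  define \<Phi> where "\<Phi> = (\<lambda>(A'::'p set, B'::'q set). int (\<Sum>a\<in>A'. card {b\<in>B'. r a b})
      - int (\<Sum>a\<in>A'. wa a) - int (\<Sum>b\<in>B'. wb b))"
  define Cs where "Cs = Pow A \<times> Pow B"
  have fC: "finite Cs" unfolding Cs_def using fA fB by auto
  have neC: "(A, B) \<in> Cs" unfolding Cs_def by auto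
  define M where "M = Max (\<Phi> ` Cs)"
  have "M \<in> \<Phi> ` Cs" unfolding M_def using fC neC by (intro Max_in) auto
  then obtain A' B' where AB': "(A', B') \<in> Cs" and M: "\<Phi> (A', B') = M" by auto
  have maxi: "\<And>x. x \<in> Cs \<Longrightarrow> \<Phi> x \<le> M" unfolding M_def using fC by auto
  have sub: "A' \<subseteq> A" "B' \<subseteq> B" using AB' unfolding Cs_def by auto
  have fA': "finite A'" and fB': "finite B'" using sub fA fB finite_subset by auto
  have "\<Phi> (A, B) > 0" unfolding \<Phi>_def using big by (simp del: of_nat_sum)
  then have Mpos: "M > 0" using maxi[OF neC] by simp
  have "A' \<noteq> {}"
  proof
    assume "A' = {}"
    then have "\<Phi> (A', B') \<le> 0" unfolding \<Phi>_def by (simp add: sum_nonneg)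
    then show False using M Mpos by simp
  qed
  moreover have "\<forall>a\<in>A'. wa a \<le> card {b\<in>B'. r a b}"
  proof (rule ccontr)
    assume "\<not> ?thesis"
    then obtain a where a: "a \<in> A'" and lt: "card {b\<in>B'. r a b} < wa a" by auto
    have "(A' - {a}, B') \<in> Cs" using AB' unfolding Cs_def by auto
    then have le: "\<Phi> (A' - {a}, B') \<le> M" by (rule maxi)
    have e1: "(\<Sum>x\<in>A'. card {b\<in>B'. r x b}) = card {b\<in>B'. r a b} + (\<Sum>x\<in>A' - {a}. card {b\<in>B'. r x b})"
      using a fA' by (simp add: sum.remove)
    have e2: "(\<Sum>x\<in>A'. wa x) = wa a + (\<Sum>x\<in>A' - {a}. wa x)"
      using a fA' by (simp add: sum.remove)
    have "\<Phi> (A' - {a}, B') > \<Phi> (A', B')" unfolding \<Phi>_def using e1 e2 lt by (simp del: of_nat_sum)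
    then show False using le M by simp
  qed
  moreover have "\<forall>b\<in>B'. wb b \<le> card {a\<in>A'. r a b}"
  proof (rule ccontr)
    assume "\<not> ?thesis"
    then obtain b where b: "b \<in> B'" and lt: "card {a\<in>A'. r a b} < wb b" by auto
    have "(A', B' - {b}) \<in> Cs" using AB' unfolding Cs_def by auto
    then have le: "\<Phi> (A', B' - {b}) \<le> M" by (rule maxi)
    have fB'': "finite (B' - {b})" using fB' by auto
    have e1: "(\<Sum>x\<in>B'. card {a\<in>A'. r a x}) = card {a\<in>A'. r a b} + (\<Sum>x\<in>B' - {b}. card {a\<in>A'. r a x})"
      using b fB' by (simp add: sum.remove)
    have e2: "(\<Sum>x\<in>B'. wb x) = wb b + (\<Sum>x\<in>B' - {b}. wb x)"
      using b fB' by (simp add: sum.remove)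
    have "\<Phi> (A', B' - {b}) > \<Phi> (A', B')" unfolding \<Phi>_def
      using e1 e2 lt dcount[OF fA' fB', of r] dcount[OF fA' fB'', of r] by (simp del: of_nat_sum)
    then show False using le M by simp
  qed
  ultimately show ?thesis using sub by blast
qed



definition cn :: "'b set \<Rightarrow> 'b set set \<Rightarrow> 'b \<times> 'b \<Rightarrow> 'b set" where
  "cn U E p = {u\<in>U. adj E u (fst p) \<and> adj E u (snd p)}"

definition nb :: "'b set \<Rightarrow> 'b set set \<Rightarrow> 'b \<Rightarrow> 'b set" where
  "nb W E u = {w\<in>W. adj E u w}"

lemma card_pairs: "finite Z \<Longrightarrow> card (pairs Z) = card Z * (card Z - 1)"
proof -
  assume f: "finite Z"
  have e: "pairs Z = Z \<times> Z - (\<lambda>x. (x, x)) ` Z" unfolding pairs_def by auto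
  have "card ((\<lambda>x. (x, x)) ` Z) = card Z" by (rule card_image) (auto simp: inj_on_def)
  then have "card (pairs Z) = card Z * card Z - card Z"
    unfolding e using f by (subst card_Diff_subset) (auto simp: card_cartesian_product)
  then show ?thesis by (simp add: diff_mult_distrib2)
qed

lemma finite_pairs: "finite Z \<Longrightarrow> finite (pairs Z)"
  unfolding pairs_def by (rule finite_subset[of _ "Z \<times> Z"]) auto

lemma G1:
  assumes "finite U" "finite W"
  shows "(\<Sum>p\<in>pairs W. card (cn U E p)) = (\<Sum>u\<in>U. card (nb W E u) * (card (nb W E u) - 1))"
proof -
  have "(\<Sum>p\<in>pairs W. card (cn U E p)) = (\<Sum>p\<in>pairs W. card {u\<in>U. adj E u (fst p) \<and> adj E u (snd p)})"
    unfolding cn_def ..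
  also have "\<dots> = (\<Sum>u\<in>U. card {p\<in>pairs W. adj E u (fst p) \<and> adj E u (snd p)})"
    by (rule dcount) (use assms finite_pairs in auto)
  also have "\<dots> = (\<Sum>u\<in>U. card (pairs (nb W E u)))"
    by (intro sum.cong refl arg_cong[where f=card]) (auto simp: pairs_def nb_def)
  also have "\<dots> = (\<Sum>u\<in>U. card (nb W E u) * (card (nb W E u) - 1))"
    using assms by (intro sum.cong refl card_pairs) (auto simp: nb_def)
  finally show ?thesis .
qed

lemma comp_iff1: "P \<in> pairs X \<Longrightarrow> {Q\<in>pairs Y. compE E P Q} = pairs (cn Y E P)"
  unfolding pairs_def cn_def compE_def by (auto simp: adj_sym)

lemma comp_iff2: "Q \<in> pairs Y \<Longrightarrow> {P\<in>pairs X. compE E P Q} = pairs (cn X E Q)"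
  unfolding pairs_def cn_def compE_def by (auto simp: adj_sym)

lemma G2:
  assumes "finite X" "finite Y"
  shows "(\<Sum>P\<in>pairs X. card (cn Y E P) * (card (cn Y E P) - 1)) =
         (\<Sum>Q\<in>pairs Y. card (cn X E Q) * (card (cn X E Q) - 1))"
proof -
  have "(\<Sum>P\<in>pairs X. card (cn Y E P) * (card (cn Y E P) - 1)) = (\<Sum>P\<in>pairs X. card {Q\<in>pairs Y. compE E P Q})"
    using assms by (intro sum.cong refl) (simp add: comp_iff1 card_pairs cn_def)
  also have "\<dots> = (\<Sum>Q\<in>pairs Y. card {P\<in>pairs X. compE E P Q})"
    by (rule dcount) (use assms finite_pairs in auto)
  also have "\<dots> = (\<Sum>Q\<in>pairs Y. card (cn X E Q) * (card (cn X E Q) - 1))"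
    using assms by (intro sum.cong refl) (simp add: comp_iff2 card_pairs cn_def)
  finally show ?thesis .
qed

lemma real_dd: "real (d * (d - 1)) = real d * (real d - 1)"
  by (cases d) (auto simp: algebra_simps)

lemma CS:
  assumes fI: "finite I" and cI: "card I \<le> M" and M: "0 < M"
  shows "real (\<Sum>i\<in>I. f i * (f i - 1)) \<ge> (real (\<Sum>i\<in>I. f i))^2 / M - real (\<Sum>i\<in>I. f i)"
proof -
  have l: "real (\<Sum>i\<in>I. f i * (f i - 1)) = (\<Sum>i\<in>I. (real (f i))^2) - (\<Sum>i\<in>I. real (f i))"
    by (simp add: real_dd power2_eq_square algebra_simps sum_subtractf)
  have cs: "(\<Sum>i\<in>I. real (f i))^2 \<le> (\<Sum>i\<in>I. (real (f i))^2) * card I"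
    by (rule sum_squared_le_sum_of_squares)
  have "(\<Sum>i\<in>I. real (f i))^2 \<le> (\<Sum>i\<in>I. (real (f i))^2) * M"
    using cs cI by (meson order.trans mult_left_mono of_nat_le_iff sum_nonneg zero_le_power2)
  then have "(\<Sum>i\<in>I. real (f i))^2 / M \<le> (\<Sum>i\<in>I. (real (f i))^2)"
    using M by (simp add: divide_le_eq)
  then show ?thesis using l by simp
qed



lemma arith_main:
  fixes C K n N d Q S R e :: real
  assumes C2: "C \<ge> 2" and CK1: "C - 1 \<ge> 2*K" and CK2: "C^2 - 2 \<ge> 2*K+1" and K0: "K \<ge> 0"
    and n1: "n \<ge> 1" and N1: "N \<ge> 1" and dl: "d = C * sqrt n"
    and q1: "Q \<ge> S^2/n^2 - S" and q2: "Q \<ge> R^2/N^2 - R" and hS: "S > C*n^2"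
    and s1: "S \<ge> e*(d-1)" and r1: "R \<le> e*N" and r2: "R \<ge> e^2/n - e" and ev: "e \<ge> N*d"
    and R0: "R \<ge> 0"
  shows "Q > K*(S+R)"
proof -
  have n2: "n^2 > 0" using n1 by simp
  have "C*n^2 > 0" using C2 n2 by (intro mult_pos_pos) auto
  then have Spos: "S > 0" using hS by linarith
  show ?thesis
  proof (cases "R \<le> S")
    case True
    have "S/n^2 > C" using hS n2 by (simp add: less_divide_eq mult.commute)
    then have "S * (S/n^2) > S * C" using Spos by (rule mult_strict_left_mono)
    moreover have "S^2/n^2 = S * (S/n^2)" by (simp add: power2_eq_square)
    ultimately have "Q > S*C - S" using q1 by linarith
    moreover have "S*C - S \<ge> S*(2*K)"
    proof -
      have "S*(C-1) \<ge> S*(2*K)" using CK1 Spos by (intro mult_left_mono) auto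
      then show ?thesis by (simp add: algebra_simps)
    qed
    moreover have "S*(2*K) \<ge> K*(S+R)"
    proof -
      have "K*(S+R) \<le> K*(2*S)" using True K0 by (intro mult_left_mono) auto
      then show ?thesis by (simp add: algebra_simps)
    qed
    ultimately show ?thesis by linarith
  next
    case False
    then have RS: "R > S" by simp
    have sq: "sqrt n \<ge> 1" using n1 by simp
    have "C * sqrt n \<ge> 2 * 1" using C2 sq by (intro mult_mono) auto
    then have d2: "d \<ge> 2" using dl by simp
    have dsq: "d^2 = C^2 * n" using dl n1 by (simp add: power_mult_distrib)
    have epos: "e > 0"
    proof (rule ccontr)
      assume "\<not> e > 0"
      then have "e * N \<le> 0" using N1 by (simp add: mult_nonpos_nonneg)
      then show False using r1 RS Spos by linarith
    qed
    have "e*(d-1) < e*N" using s1 RS r1 by linarith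
    then have dN: "d - 1 < N" using epos by simp
    have dN2: "d < 2*N" using dN d2 by linarith
    have "N*d \<ge> (d-1)*d" using dN d2 by (simp add: mult_right_mono)
    moreover have "(d-1)*d \<ge> d^2/2"
    proof -
      have "d*(d-2) \<ge> 0" using d2 by (intro mult_nonneg_nonneg) auto
      moreover have "(d-1)*d - d^2/2 = d*(d-2)/2" by (simp add: power2_eq_square field_simps)
      ultimately show ?thesis by linarith
    qed
    moreover have "d^2/2 \<ge> 2*n" using dsq C2 n1
    proof -
      have "C*C \<ge> 2*2" using C2 by (intro mult_mono) auto
      then have "C^2 \<ge> 4" by (simp add: power2_eq_square)
      then have "C^2 * n \<ge> 4 * n" using n1 by (simp add: mult_right_mono)
      then show ?thesis using dsq by simp
    qed
    ultimately have Nd: "N*d \<ge> 2*n" by linarith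
    have n0: "n > 0" using n1 by simp
    have a1: "N*d/n - 1 \<ge> 0" using Nd n0 by (simp add: le_divide_eq)
    have a2: "e/n - 1 \<ge> N*d/n - 1" using ev n0 by (simp add: divide_right_mono)
    have "e^2/n - e = e * (e/n - 1)" by (simp add: power2_eq_square algebra_simps)
    moreover have "e * (e/n - 1) \<ge> (N*d) * (N*d/n - 1)"
      using ev a1 a2 N1 d2 by (intro mult_mono) (auto simp: less_imp_le[OF epos])
    moreover have "(N*d) * (N*d/n - 1) = N^2 * C^2 - N*d"
      using dsq n0 by (simp add: power2_eq_square field_simps)
    ultimately have R1: "R \<ge> N^2 * C^2 - N*d" using r2 by linarith
    have N2: "N^2 > 0" using N1 by simp
    have "N*d < N * (2*N)" using dN2 N1 by simp
    then have "N*d < 2 * N^2" by (simp add: power2_eq_square)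
    then have "R > N^2 * (C^2 - 2)" using R1 by (simp add: algebra_simps)
    then have RN: "R/N^2 > C^2 - 2" using N2 by (simp add: less_divide_eq mult.commute)
    have Rpos: "R > 0" using RS Spos by linarith
    have "R * (R/N^2) > R * (C^2 - 2)" using RN Rpos by (rule mult_strict_left_mono)
    moreover have "R^2/N^2 = R * (R/N^2)" by (simp add: power2_eq_square)
    moreover have "R * (C^2 - 2) \<ge> R * (2*K+1)" using CK2 Rpos by simp
    moreover have "R * (2*K+1) = R*(2*K) + R" by (simp add: algebra_simps)
    ultimately have "Q > R*(2*K)" using q2 by linarith
    moreover have "R*(2*K) \<ge> K*(S+R)"
    proof -
      have "K*(S+R) \<le> K*(2*R)" using RS K0 by (intro mult_left_mono) auto
      then show ?thesis by (simp add: algebra_simps)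
    qed
    ultimately show ?thesis by linarith
  qed
qed



lemma avoid_count:
  assumes fc: "finite c" and D: "D \<subseteq> c \<times> c" and hit: "\<forall>q\<in>D. fst q \<in> S \<or> snd q \<in> S"
    and fS: "finite S" and cS: "card S \<le> s"
  shows "card D \<le> 2 * s * card c"
proof -
  have "D \<subseteq> (S \<inter> c) \<times> c \<union> c \<times> (S \<inter> c)" using D hit by auto
  then have "card D \<le> card ((S \<inter> c) \<times> c \<union> c \<times> (S \<inter> c))" using fc by (intro card_mono) auto
  also have "\<dots> \<le> card ((S \<inter> c) \<times> c) + card (c \<times> (S \<inter> c))" by (rule card_Un_le)
  also have "\<dots> = 2 * (card (S \<inter> c) * card c)" by (simp add: card_cartesian_product)
  also have "\<dots> \<le> 2 * (s * card c)"
  proof -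
    have "card (S \<inter> c) \<le> s" using cS fS by (meson card_mono inf_le1 order.trans)
    then show ?thesis by simp
  qed
  finally show ?thesis by simp
qed

lemma comp_sel: "compE H P Q \<Longrightarrow> adj H ((if i then snd else fst) P) ((if j then snd else fst) Q)"
  unfolding compE_def by (cases i; cases j) auto

theorem mainTheorem8:
  fixes VT :: "'a set" and ET :: "'a set set" and v :: 'a
  assumes "is_tree VT ET" and "v \<in> VT"
  shows "\<exists>C::real. \<forall>(X::'b set) Y EH.
     bipartite_graph X Y EH \<longrightarrow>
     (\<forall>y\<in>Y. real (degree EH y) \<ge> C * sqrt (real (card X))) \<longrightarrow>
     real (card (cherries X Y EH)) > C * real (card X) ^ 2 \<longrightarrow>
     (\<exists>f. subgraph_copy (blowup2_V VT) (blowup2_E ET) (X \<union> Y) EH f \<and>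
          f (v, False) \<in> X \<and> f (v, True) \<in> X)"
proof -
  define s where "s = 2 * card VT"
  define K :: nat where "K = 2 * s + 1"
  define C :: real where "C = real (4 * K + 4)"
  have sgT: "simple_graph VT ET" and acT: "acyclic_graph VT ET"
    using assms(1) unfolding is_tree_def by auto
  have main: "\<exists>f. subgraph_copy (blowup2_V VT) (blowup2_E ET) (X \<union> Y) EH f \<and>
          f (v, False) \<in> X \<and> f (v, True) \<in> X"
    if bip: "bipartite_graph X Y EH"
      and deg: "\<forall>y\<in>Y. real (degree EH y) \<ge> C * sqrt (real (card X))"
      and cher: "real (card (cherries X Y EH)) > C * real (card X) ^ 2"
    for X Y :: "'b set" and EH
  proof -
    have fX: "finite X" and fY: "finite Y" and dis: "X \<inter> Y = {}"
      and EHsub: "EH \<subseteq> {{x, y} | x y. x \<in> X \<and> y \<in> Y}"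
      using bip unfolding bipartite_graph_def by auto
    define n where "n = card X"
    define N where "N = card Y"
    define dY where "dY y = card (nb X EH y)" for y
    define dX where "dX x = card (nb Y EH x)" for x
    define Sn where "Sn = (\<Sum>y\<in>Y. dY y * (dY y - 1))"
    define Rn where "Rn = (\<Sum>x\<in>X. dX x * (dX x - 1))"
    define e where "e = (\<Sum>y\<in>Y. dY y)"
    define cx where "cx P = card (cn Y EH P)" for P
    define cy where "cy Q = card (cn X EH Q)" for Q
    define Q4 where "Q4 = (\<Sum>P\<in>pairs X. cx P * (cx P - 1))"
    have degeq: "degree EH y = dY y" if "y \<in> Y" for y
    proof -
      have "{x. {x, y} \<in> EH} = nb X EH y"
      proof (rule set_eqI)
        fix x
        show "x \<in> {x. {x, y} \<in> EH} \<longleftrightarrow> x \<in> nb X EH y"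
        proof
          assume "x \<in> {x. {x, y} \<in> EH}"
          then obtain x' y' where "{x, y} = {x', y'}" "x' \<in> X" "y' \<in> Y" using EHsub by blast
          then have "x \<in> X" using dis that by (metis disjoint_iff doubleton_eq_iff)
          then show "x \<in> nb X EH y" using \<open>x \<in> {x. {x, y} \<in> EH}\<close> by (simp add: nb_def adj_def insert_commute)
        qed (simp add: nb_def adj_def insert_commute)
      qed
      then show ?thesis unfolding degree_def dY_def by simp
    qed
    have cheq: "cherries X Y EH = Sigma Y (\<lambda>y. pairs (nb X EH y))"
      using dis unfolding cherries_def pairs_def nb_def adj_def by auto
    have cardch: "card (cherries X Y EH) = Sn"
      unfolding cheq Sn_def dY_def using fY fX
      by (subst card_SigmaI) (auto simp: card_pairs nb_def intro: finite_pairs)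
    have F2: "(\<Sum>P\<in>pairs X. cx P) = Sn" unfolding cx_def Sn_def dY_def using G1[OF fY fX] by simp
    have F3: "(\<Sum>Q\<in>pairs Y. cy Q) = Rn" unfolding cy_def Rn_def dX_def using G1[OF fX fY] by simp
    have F4: "Q4 = (\<Sum>Q\<in>pairs Y. cy Q * (cy Q - 1))" unfolding Q4_def cx_def cy_def using G2[OF fX fY] by simp
    have F5: "e = (\<Sum>x\<in>X. dX x)"
    proof -
      have "e = (\<Sum>y\<in>Y. card {x\<in>X. adj EH y x})" unfolding e_def dY_def nb_def ..
      also have "\<dots> = (\<Sum>x\<in>X. card {y\<in>Y. adj EH y x})" by (rule dcount[OF fY fX])
      also have "\<dots> = (\<Sum>x\<in>X. dX x)" unfolding dX_def nb_def by (simp add: adj_sym)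
      finally show ?thesis .
    qed
    have Cge: "C \<ge> 2" unfolding C_def by simp
    have "real Sn > 0"
    proof -
      have "C * real n ^ 2 \<ge> 0" using Cge by simp
      then show ?thesis using cher cardch unfolding n_def by linarith
    qed
    then have "cherries X Y EH \<noteq> {}" using cardch by (metis card.empty of_nat_0 less_irrefl)
    then obtain y0 x1 x2 where "(y0, x1, x2) \<in> cherries X Y EH" by (metis ex_in_conv prod_cases3)
    then have y0: "y0 \<in> Y" and x1: "x1 \<in> X" unfolding cherries_def by auto
    have n1: "n \<ge> 1" unfolding n_def using x1 fX by (metis One_nat_def Suc_leI card_gt_0_iff empty_iff)
    have N1: "N \<ge> 1" unfolding N_def using y0 fY by (metis One_nat_def Suc_leI card_gt_0_iff empty_iff)
    define d where "d = C * sqrt (real n)"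
    have dYd: "real (dY y) \<ge> d" if "y \<in> Y" for y using deg that degeq unfolding d_def n_def by auto
    have q1: "real Q4 \<ge> (real Sn)^2 / (real n)^2 - real Sn"
    proof -
      have "card (pairs X) \<le> n^2" unfolding n_def using fX by (simp add: card_pairs power2_eq_square)
      then show ?thesis using CS[of "pairs X" "n^2" cx] finite_pairs[OF fX] n1 F2
        unfolding Q4_def by simp
    qed
    have q2: "real Q4 \<ge> (real Rn)^2 / (real N)^2 - real Rn"
    proof -
      have "card (pairs Y) \<le> N^2" unfolding N_def using fY by (simp add: card_pairs power2_eq_square)
      then show ?thesis using CS[of "pairs Y" "N^2" cy] finite_pairs[OF fY] N1 F3
        unfolding F4 by simp
    qed
    have hS: "real Sn > C * (real n)^2" using cher cardch unfolding n_def by simp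
    have s1: "real Sn \<ge> real e * (d - 1)"
    proof -
      have "real Sn = (\<Sum>y\<in>Y. real (dY y) * (real (dY y) - 1))" unfolding Sn_def
        by (simp only: of_nat_sum real_dd)
      also have "\<dots> \<ge> (\<Sum>y\<in>Y. real (dY y) * (d - 1))"
        using dYd by (intro sum_mono mult_left_mono) auto
      finally show ?thesis unfolding e_def by (simp add: sum_distrib_right)
    qed
    have r1: "real Rn \<le> real e * real N"
    proof -
      have "Rn \<le> (\<Sum>x\<in>X. dX x * N)" unfolding Rn_def
      proof (intro sum_mono)
        fix x assume "x \<in> X"
        have "dX x \<le> N" unfolding dX_def N_def nb_def using fY by (intro card_mono) auto
        then show "dX x * (dX x - 1) \<le> dX x * N" by (intro mult_le_mono) auto
      qed
      also have "\<dots> = e * N" unfolding F5 by (simp add: sum_distrib_right)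
      finally show ?thesis by (metis of_nat_le_iff of_nat_mult)
    qed
    have r2: "real Rn \<ge> (real e)^2 / real n - real e"
      using CS[of X n dX] fX n1 unfolding Rn_def F5 n_def by simp
    have ev: "real e \<ge> real N * d"
    proof -
      have "(\<Sum>y\<in>Y. d) \<le> (\<Sum>y\<in>Y. real (dY y))" using dYd by (intro sum_mono) auto
      then show ?thesis unfolding e_def N_def by simp
    qed
    have big: "real Q4 > real K * (real Sn + real Rn)"
      by (rule arith_main[OF Cge _ _ _ _ _ d_def q1 q2 hS s1 r1 r2 ev])
        (use n1 N1 in \<open>auto simp: C_def power2_eq_square algebra_simps\<close>)
    have bign: "Q4 > K * (Sn + Rn)"
    proof -
      have "real (K * (Sn + Rn)) < real Q4" using big by simp
      then show ?thesis by (simp only: of_nat_less_iff)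
    qed
    define A where "A = {P\<in>pairs X. cx P > 0}"
    define B where "B = {Q\<in>pairs Y. cy Q > 0}"
    define wa where "wa P = 2 * s * cx P + 1" for P
    define wb where "wb Q = 2 * s * cy Q + 1" for Q
    have fA: "finite A" unfolding A_def using finite_pairs[OF fX] by simp
    have fB: "finite B" unfolding B_def using finite_pairs[OF fY] by simp
    have cxfin: "finite (cn Y EH P)" for P unfolding cn_def using fY by simp
    have cyfin: "finite (cn X EH Q)" for Q unfolding cn_def using fX by simp
    have eqA: "{Q\<in>B. compE EH P Q} = pairs (cn Y EH P)" if "P \<in> pairs X" for P
    proof -
      have "{Q\<in>B. compE EH P Q} = {Q\<in>pairs Y. compE EH P Q}"
      proof (rule set_eqI, rule iffI)
        fix Q assume Q: "Q \<in> {Q\<in>pairs Y. compE EH P Q}"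
        then have "{P\<in>pairs X. compE EH P Q} = pairs (cn X EH Q)" by (intro comp_iff2) auto
        then have "P \<in> pairs (cn X EH Q)" using Q that by auto
        then have "fst P \<in> cn X EH Q" unfolding pairs_def by auto
        then have "cy Q > 0" unfolding cy_def using cyfin[of Q] card_gt_0_iff by blast
        then show "Q \<in> {Q\<in>B. compE EH P Q}" using Q unfolding B_def by auto
      qed (auto simp: B_def)
      then show ?thesis using comp_iff1[OF that] by simp
    qed
    have e1: "(\<Sum>P\<in>A. card {Q\<in>B. compE EH P Q}) = Q4"
    proof -
      have "(\<Sum>P\<in>A. card {Q\<in>B. compE EH P Q}) = (\<Sum>P\<in>A. cx P * (cx P - 1))"
        using eqA by (intro sum.cong refl) (auto simp: A_def cx_def card_pairs cxfin)
      also have "\<dots> = Q4" unfolding Q4_def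
        by (rule sum.mono_neutral_left) (use finite_pairs[OF fX] in \<open>auto simp: A_def\<close>)
      finally show ?thesis .
    qed
    have e2: "(\<Sum>P\<in>A. wa P) \<le> K * Sn"
    proof -
      have "(\<Sum>P\<in>A. wa P) \<le> (\<Sum>P\<in>A. K * cx P)"
      proof (intro sum_mono)
        fix P assume "P \<in> A"
        then have "cx P \<ge> 1" unfolding A_def by auto
        then show "wa P \<le> K * cx P" unfolding wa_def K_def by (simp add: algebra_simps)
      qed
      also have "\<dots> = K * (\<Sum>P\<in>A. cx P)" by (simp add: sum_distrib_left)
      also have "\<dots> \<le> K * Sn"
      proof -
        have "(\<Sum>P\<in>A. cx P) \<le> (\<Sum>P\<in>pairs X. cx P)"
          by (rule sum_mono2) (use finite_pairs[OF fX] in \<open>auto simp: A_def\<close>)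
        then show ?thesis using F2 by simp
      qed
      finally show ?thesis .
    qed
    have e3: "(\<Sum>Q\<in>B. wb Q) \<le> K * Rn"
    proof -
      have "(\<Sum>Q\<in>B. wb Q) \<le> (\<Sum>Q\<in>B. K * cy Q)"
      proof (intro sum_mono)
        fix Q assume "Q \<in> B"
        then have "cy Q \<ge> 1" unfolding B_def by auto
        then show "wb Q \<le> K * cy Q" unfolding wb_def K_def by (simp add: algebra_simps)
      qed
      also have "\<dots> = K * (\<Sum>Q\<in>B. cy Q)" by (simp add: sum_distrib_left)
      also have "\<dots> \<le> K * Rn"
      proof -
        have "(\<Sum>Q\<in>B. cy Q) \<le> (\<Sum>Q\<in>pairs Y. cy Q)"
          by (rule sum_mono2) (use finite_pairs[OF fY] in \<open>auto simp: B_def\<close>)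
        then show ?thesis using F3 by simp
      qed
      finally show ?thesis .
    qed
    have "(\<Sum>P\<in>A. card {Q\<in>B. compE EH P Q}) > (\<Sum>P\<in>A. wa P) + (\<Sum>Q\<in>B. wb Q)"
      using e1 e2 e3 bign by (simp add: add_mult_distrib2)
    then obtain A' B' where A'A: "A' \<subseteq> A" and B'B: "B' \<subseteq> B" and A'ne: "A' \<noteq> {}"
      and hA0: "\<forall>a\<in>A'. wa a \<le> card {b\<in>B'. compE EH a b}"
      and hB0: "\<forall>b\<in>B'. wb b \<le> card {a\<in>A'. compE EH a b}"
      using core[OF fA fB, where r="compE EH" and wa=wa and wb=wb] by blast
    have hA: "\<forall>P\<in>A'. \<forall>S. finite S \<longrightarrow> card S \<le> s \<longrightarrow> (\<exists>Q\<in>B'. compE EH P Q \<and> fst Q \<notin> S \<and> snd Q \<notin> S)"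
    proof (intro ballI allI impI)
      fix P and S :: "'b set" assume P: "P \<in> A'" and fS: "finite S" and cS: "card S \<le> s"
      show "\<exists>Q\<in>B'. compE EH P Q \<and> fst Q \<notin> S \<and> snd Q \<notin> S"
      proof (rule ccontr)
        assume "\<not> ?thesis"
        then have hit: "\<forall>q\<in>{Q\<in>B'. compE EH P Q}. fst q \<in> S \<or> snd q \<in> S" by auto
        have PX: "P \<in> pairs X" using P A'A unfolding A_def by auto
        have "{Q\<in>B'. compE EH P Q} \<subseteq> cn Y EH P \<times> cn Y EH P"
          using comp_iff1[OF PX, of Y EH] B'B unfolding B_def pairs_def by auto
        then have "card {Q\<in>B'. compE EH P Q} \<le> 2 * s * cx P"
          unfolding cx_def using avoid_count[OF cxfin _ hit fS cS] by blast
        moreover have "wa P \<le> card {Q\<in>B'. compE EH P Q}" using hA0 P by auto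
        ultimately show False unfolding wa_def by simp
      qed
    qed
    have hB: "\<forall>Q\<in>B'. \<forall>S. finite S \<longrightarrow> card S \<le> s \<longrightarrow> (\<exists>P\<in>A'. compE EH P Q \<and> fst P \<notin> S \<and> snd P \<notin> S)"
    proof (intro ballI allI impI)
      fix Q and S :: "'b set" assume Q: "Q \<in> B'" and fS: "finite S" and cS: "card S \<le> s"
      show "\<exists>P\<in>A'. compE EH P Q \<and> fst P \<notin> S \<and> snd P \<notin> S"
      proof (rule ccontr)
        assume "\<not> ?thesis"
        then have hit: "\<forall>q\<in>{P\<in>A'. compE EH P Q}. fst q \<in> S \<or> snd q \<in> S" by auto
        have QY: "Q \<in> pairs Y" using Q B'B unfolding B_def by auto
        have "{P\<in>A'. compE EH P Q} \<subseteq> cn X EH Q \<times> cn X EH Q"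
          using comp_iff2[OF QY, of X EH] A'A unfolding A_def pairs_def by auto
        then have "card {P\<in>A'. compE EH P Q} \<le> 2 * s * cy Q"
          unfolding cy_def using avoid_count[OF cyfin _ hit fS cS] by blast
        moreover have "wb Q \<le> card {P\<in>A'. compE EH P Q}" using hB0 Q by auto
        ultimately show False unfolding wb_def by simp
      qed
    qed
    have Ad: "\<forall>P\<in>A'. fst P \<noteq> snd P" using A'A unfolding A_def pairs_def by auto
    have Bd: "\<forall>Q\<in>B'. fst Q \<noteq> snd Q" using B'B unfolding B_def pairs_def by auto
    obtain f where f: "emb_ok VT ET EH A' B' v f"
      using embed[OF sgT acT assms(2) _ A'ne Ad Bd hA hB] unfolding s_def by blast
    have AX: "A' \<subseteq> pairs X" and BY: "B' \<subseteq> pairs Y" using A'A B'B unfolding A_def B_def by auto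
    have fsel: "f (u, i) = (if i then snd else fst) (pairof f u)" for u i
      unfolding pairof_def by (cases i) auto
    have img: "f ` (VT \<times> UNIV) \<subseteq> X \<union> Y"
    proof
      fix z assume "z \<in> f ` (VT \<times> UNIV)"
      then obtain u i where u: "u \<in> VT" and z: "z = f (u, i)" by auto
      have "pairof f u \<in> pairs X \<union> pairs Y" using f u AX BY unfolding emb_ok_def by blast
      then show "z \<in> X \<union> Y" unfolding z fsel pairs_def by (cases i) auto
    qed
    have edges: "\<forall>a\<in>VT \<times> UNIV. \<forall>b\<in>VT \<times> UNIV. {a, b} \<in> blowup2_E ET \<longrightarrow> {f a, f b} \<in> EH"
    proof (intro ballI impI)
      fix a b assume "{a, b} \<in> blowup2_E ET"
      then obtain u w i j where ab: "{a, b} = {(u, i), (w, j)}" and uw: "{u, w} \<in> ET"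
        unfolding blowup2_E_def by blast
      have adjuw: "adj ET u w" using uw unfolding adj_def .
      then have uV: "u \<in> VT" and wV: "w \<in> VT" using simple_adj_in[OF sgT] by auto
      have "compE EH (pairof f u) (pairof f w) \<or> compE EH (pairof f w) (pairof f u)"
        using f uV wV adjuw unfolding emb_ok_def by blast
      then have "adj EH (f (u, i)) (f (w, j))"
        using comp_sel[of EH "pairof f u" "pairof f w" i j] comp_sel[of EH "pairof f w" "pairof f u" j i]
        unfolding fsel by (auto simp: adj_sym)
      then have "{f (u, i), f (w, j)} \<in> EH" unfolding adj_def .
      moreover have "{f a, f b} = {f (u, i), f (w, j)}" using ab
        by (auto simp: doubleton_eq_iff)
      ultimately show "{f a, f b} \<in> EH" by simp
    qed
    have "subgraph_copy (blowup2_V VT) (blowup2_E ET) (X \<union> Y) EH f"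
      unfolding subgraph_copy_def blowup2_V_def using f img edges unfolding emb_ok_def by blast
    moreover have "f (v, False) \<in> X \<and> f (v, True) \<in> X"
      using f AX unfolding emb_ok_def pairof_def pairs_def by auto
    ultimately show ?thesis by blast
  qed
  show ?thesis by (rule exI[of _ C]) (use main in blast)
qed

end
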